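(* An instance of the Side-Access Compact Retrieval Problem admits a feasible solution if and only if for every target $b\in\mathcal B$ and every stack $t<s(b)$ we have $h(t)\ge h(b)-R(b)$.
   Context: A slice is a sequence of stacks $T=(1,\dots,m)$, indexed from the entry side (stack $1$) outward; "left" means smaller index. Stack $t$ initially consists of $h(t)\ge 0$ unit loads (ULs) stacked without gaps; a UL at height $k$ has exactly $k$ ULs below it in its stack. A pick-list $\mathcal B$ of target ULs is given; target $b$ lies in stack $s(b)$ at initial height $h(b)$; $R(b)$ is the number of targets initially located below $b$ in stack $s(b)$. Retrieval proceeds in cycles $c=1,2,\dots$; $h_c(t)$, $h_c(b)$ are the heights of stack $t$ and of a not-yet-retrieved target $b$ at the start of cycle $c$ ($h_1=h$). In cycle $c$ one chooses clearance levels $\ell_c(t)\in\{0,\dots,h_c(t)\}$: the top $e_c(t)=h_c(t)-\ell_c(t)$ ULs of stack $t$ are lifted for the whole cycle. Then a sequence $(b_{c,1},\dots,b_{c,k})$ of targets is retrieved, with residual heights $d_{c,0}=\ell_c$ and $d_{c,i}(t)=d_{c,i-1}(t)-1$ if $t=s(b_{c,i})$, else $d_{c,i}(t)=d_{c,i-1}(t)$. Retrieving $b$ (stack $t$, height $h=h_c(b)$) as the $i$-th retrieval requires accessibility: (a) $d_{c,i-1}(t)=h+1$ and (b) $d_{c,i-1}(t')=h$ for all $t'<t$. Afterwards lifted ULs are lowered, $h_{c+1}(t)=d_{c,k}(t)+e_c(t)$, and each remaining target's height decreases by the number of targets retrieved in cycle $c$ below it in its stack. Non-targets are never removed. A solution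 is feasible if every target of $\mathcal B$ is retrieved exactly once and is accessible when retrieved. *)

theory Defs
  imports Main
begin

text \<open>Stacks are indexed 1..m. Every unit load (UL) is identified by its initial
position (t,k): stack t, initial height k. A state maps each stack t to the list of
initial heights of the ULs currently in stack t, listed bottom to top; hence the
current height of a UL is its index in that list. A target b is a pair (s b, h b).\<close>

type_synonym state = "nat \<Rightarrow> nat list"

definition init_state :: "nat \<Rightarrow> (nat \<Rightarrow> nat) \<Rightarrow> state" where
  "init_state m h = (\<lambda>t. if 1 \<le> t \<and> t \<le> m then [0..<h t] else [])"

text \<open>Retrieval sequence within one cycle, acting on the residual (non-lifted) stacks d.\<close>
fun run_seq :: "state \<Rightarrow> (nat \<times> nat) list \<Rightarrow> state option" where
  "run_seq d [] = Some d"
| "run_seq d ((t, k) # bs) =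
     (if d t \<noteq> [] \<and> last (d t) = k \<and> (\<forall>t'\<in>{1..<t}. length (d t') = length (d t) - 1)
      then run_seq (d(t := butlast (d t))) bs else None)"

text \<open>A cycle: clearance levels l and a retrieval sequence. The top h_c(t) - l(t) ULs are
lifted, retrievals happen on the residual stacks, then lifted ULs are lowered.\<close>
definition run_cycle :: "nat \<Rightarrow> state \<Rightarrow> (nat \<Rightarrow> nat) \<times> (nat \<times> nat) list \<Rightarrow> state option" where
  "run_cycle m s c =
     (let l = fst c; bs = snd c in
      if \<forall>t\<in>{1..m}. l t \<le> length (s t) then
        (case run_seq (\<lambda>t. take (l t) (s t)) bs of
           None \<Rightarrow> None
         | Some d \<Rightarrow> Some (\<lambda>t. d t @ drop (l t) (s t)))
      else None)"

fun run_cycles :: "nat \<Rightarrow> state \<Rightarrow> ((nat \<Rightarrow> nat) \<times> (nat \<times> nat) list) list \<Rightarrow> state option" where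
  "run_cycles m s [] = Some s"
| "run_cycles m s (c # cs) =
     (case run_cycle m s c of None \<Rightarrow> None | Some s' \<Rightarrow> run_cycles m s' cs)"

definition feasible :: "nat \<Rightarrow> (nat \<Rightarrow> nat) \<Rightarrow> (nat \<times> nat) set \<Rightarrow> bool" where
  "feasible m h B \<longleftrightarrow>
     (\<exists>cs s'. run_cycles m (init_state m h) cs = Some s' \<and>
              distinct (concat (map snd cs)) \<and> set (concat (map snd cs)) = B)"

definition R :: "(nat \<times> nat) set \<Rightarrow> nat \<times> nat \<Rightarrow> nat" where
  "R B b = card {k. (fst b, k) \<in> B \<and> k < snd b}"

end

theory Submission
  imports Defs "HOL-Library.Product_Lexorder"
begin

section \<open>Necessity\<close>

lemma butlast_take_ex: "\<exists>n'. butlast (take n xs) = take n' xs"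
proof (cases "n \<le> length xs")
  case True then show ?thesis by (metis butlast_take)
next
  case False then show ?thesis by (metis butlast_conv_take nat_le_linear take_all)
qed

lemma take_drop_sorted:
  assumes "sorted_wrt (<) (xs::nat list)" "a \<le> b"
  shows "sorted_wrt (<) (take a xs @ drop b xs)"
proof -
  have "sorted_wrt (<) (take b xs @ drop b xs)" using assms(1) by simp
  hence s: "sorted_wrt (<) (take b xs) \<and> sorted_wrt (<) (drop b xs) \<and>
     (\<forall>x\<in>set (take b xs). \<forall>y\<in>set (drop b xs). x < y)"
    by (simp add: sorted_wrt_append del: append_take_drop_id)
  have "take a xs = take a (take b xs)" using assms(2) by (simp add: min_def)
  hence "set (take a xs) \<subseteq> set (take b xs)" by (metis set_take_subset)
  moreover have "sorted_wrt (<) (take a xs)" using assms(1) by (simp add: sorted_wrt_take)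
  ultimately show ?thesis using s by (auto simp: sorted_wrt_append)
qed

lemma below_in_butlast:
  assumes "sorted_wrt (<) (xs::nat list)" "take n xs \<noteq> []" "last (take n xs) = k"
    "j \<in> set xs" "j < k"
  shows "j \<in> set (butlast (take n xs))"
proof -
  have e: "take n xs = butlast (take n xs) @ [k]" using assms(2,3)
    by (metis append_butlast_last_id)
  have "xs = butlast (take n xs) @ [k] @ drop n xs" using e by (metis append.assoc append_take_drop_id)
  hence "sorted_wrt (<) (butlast (take n xs) @ [k] @ drop n xs)" using assms(1) by simp
  hence "\<forall>y\<in>set (drop n xs). k < y" by (simp add: sorted_wrt_append)
  moreover have "j \<in> set (butlast (take n xs)) \<or> j = k \<or> j \<in> set (drop n xs)"
    using \<open>xs = _\<close> assms(4) by (metis Un_iff append_Cons append_Nil set_ConsD set_append)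
  ultimately show ?thesis using assms(5) by auto
qed

lemma card_split: "card {j. j < k \<and> \<not> Q j} = k - card {j. Q j \<and> j < (k::nat)}"
proof -
  have "{j. j < k \<and> \<not> Q j} \<union> {j. Q j \<and> j < k} = {..<k}" by auto
  moreover have "{j. j < k \<and> \<not> Q j} \<inter> {j. Q j \<and> j < k} = {}" by auto
  ultimately have "card {j. j < k \<and> \<not> Q j} + card {j. Q j \<and> j < k} = k"
    by (metis (no_types, lifting) card_Un_disjoint card_lessThan finite_Un finite_lessThan)
  thus ?thesis by linarith
qed

lemma nec_seq:
  assumes "run_seq d bs = Some d'" "set bs \<subseteq> B" "\<forall>t. \<exists>n. d t = take n (xs t)"
    "\<forall>t j. j \<in> set (xs t) \<and> (t, j) \<notin> B \<longrightarrow> j \<in> set (d t)"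
    "\<forall>t. sorted_wrt (<) (xs t)"
    "\<forall>t. \<forall>k\<in>set (xs t). \<forall>j<k. (t, j) \<notin> B \<longrightarrow> j \<in> set (xs t)"
  shows "(\<forall>t. \<exists>n. d' t = take n (xs t)) \<and> (\<forall>t j. j \<in> set (xs t) \<and> (t, j) \<notin> B \<longrightarrow> j \<in> set (d' t))
     \<and> (\<forall>(t, k)\<in>set bs. \<forall>t'\<in>{1..<t}. k - R B (t, k) \<le> length (xs t'))"
  using assms(1-4)
proof (induction bs arbitrary: d)
  case Nil
  then show ?case by simp
next
  case (Cons b bs)
  obtain t k where b: "b = (t, k)" by fastforce
  from Cons.prems(1) b have c: "d t \<noteq> [] \<and> last (d t) = k \<and> (\<forall>t'\<in>{1..<t}. length (d t') = length (d t) - 1)"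
    and r: "run_seq (d(t := butlast (d t))) bs = Some d'"
    by (auto split: if_splits)
  have kB: "(t, k) \<in> B" using Cons.prems(2) b by auto
  obtain n where n: "d t = take n (xs t)" using Cons.prems(3) by blast
  have IH: "(\<forall>t. \<exists>n. d' t = take n (xs t)) \<and> (\<forall>t j. j \<in> set (xs t) \<and> (t, j) \<notin> B \<longrightarrow> j \<in> set (d' t))
     \<and> (\<forall>(t, k)\<in>set bs. \<forall>t'\<in>{1..<t}. k - R B (t, k) \<le> length (xs t'))"
  proof (rule Cons.IH[OF r])
    show "set bs \<subseteq> B" using Cons.prems(2) by simp
    show "\<forall>ta. \<exists>n. (d(t := butlast (d t))) ta = take n (xs ta)"
      using Cons.prems(3) n butlast_take_ex by (metis fun_upd_apply)
    show "\<forall>ta j. j \<in> set (xs ta) \<and> (ta, j) \<notin> B \<longrightarrow> j \<in> set ((d(t := butlast (d t))) ta)"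
    proof (intro allI impI)
      fix ta j assume a: "j \<in> set (xs ta) \<and> (ta, j) \<notin> B"
      hence jd: "j \<in> set (d ta)" using Cons.prems(4) by blast
      show "j \<in> set ((d(t := butlast (d t))) ta)"
      proof (cases "ta = t")
        case True
        hence "j \<noteq> k" using a kB by auto
        moreover have "d t = butlast (d t) @ [k]" using c by (metis append_butlast_last_id)
        ultimately show ?thesis using jd True by (metis Un_iff empty_iff empty_set fun_upd_same set_ConsD set_append)
      qed (use jd in simp)
    qed
  qed
  have "\<forall>t'\<in>{1..<t}. k - R B (t, k) \<le> length (xs t')"
  proof
    fix t' assume t': "t' \<in> {1..<t}"
    have sub: "{j. j < k \<and> (t, j) \<notin> B} \<subseteq> set (butlast (d t))"
    proof
      fix j assume "j \<in> {j. j < k \<and> (t, j) \<notin> B}"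
      hence j: "j < k" "(t, j) \<notin> B" by auto
      have "k \<in> set (xs t)" using c n by (metis in_set_takeD last_in_set)
      hence "j \<in> set (xs t)" using assms(6) j by blast
      thus "j \<in> set (butlast (d t))" using below_in_butlast[OF _ _ _ _ j(1)] assms(5) c n by metis
    qed
    have "k - R B (t, k) = card {j. j < k \<and> (t, j) \<notin> B}"
      unfolding R_def using card_split[of k "\<lambda>j. (t, j) \<in> B"] by simp
    also have "\<dots> \<le> card (set (butlast (d t)))" using sub by (simp add: card_mono)
    also have "\<dots> \<le> length (butlast (d t))" by (rule card_length)
    also have "\<dots> = length (d t')" using c t' by simp
    also have "\<dots> \<le> length (xs t')"
    proof -
      obtain n' where "d t' = take n' (xs t')" using Cons.prems(3) by blast
      thus ?thesis by simp
    qed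
    finally show "k - R B (t, k) \<le> length (xs t')" .
  qed
  then show ?case using IH b by auto
qed

definition Inv :: "(nat \<times> nat) set \<Rightarrow> (nat \<Rightarrow> nat) \<Rightarrow> state \<Rightarrow> bool" where
  "Inv B h s \<longleftrightarrow> (\<forall>t. sorted_wrt (<) (s t) \<and> length (s t) \<le> h t \<and>
      (\<forall>k\<in>set (s t). \<forall>j<k. (t, j) \<notin> B \<longrightarrow> j \<in> set (s t)))"

lemma dc_take:
  assumes "sorted_wrt (<) (xs::nat list)" "\<forall>k\<in>set xs. \<forall>j<k. P j \<longrightarrow> j \<in> set xs"
  shows "\<forall>k\<in>set (take L xs). \<forall>j<k. P j \<longrightarrow> j \<in> set (take L xs)"
proof (intro ballI allI impI)
  fix k j assume k: "k \<in> set (take L xs)" and j: "j < k" "P j"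
  have "sorted_wrt (<) (take L xs @ drop L xs)" using assms(1) by simp
  hence lt: "\<forall>x\<in>set (take L xs). \<forall>y\<in>set (drop L xs). x < y" by (simp add: sorted_wrt_append del: append_take_drop_id)
  have "j \<in> set xs" using assms(2) k j by (meson in_set_takeD)
  hence "j \<in> set (take L xs) \<or> j \<in> set (drop L xs)" by (metis Un_iff append_take_drop_id set_append)
  thus "j \<in> set (take L xs)" using lt k j(1) by fastforce
qed

lemma nec_cycle:
  assumes "run_cycle m s c = Some s''" "Inv B h s" "set (snd c) \<subseteq> B"
  shows "Inv B h s'' \<and> (\<forall>(t, k)\<in>set (snd c). \<forall>t'\<in>{1..<t}. k - R B (t, k) \<le> h t')"
proof -
  obtain l bs where c: "c = (l, bs)" by fastforce
  define xs where "xs = (\<lambda>t. take (l t) (s t))"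
  from assms(1) c obtain d' where rs: "run_seq xs bs = Some d'"
    and s'': "s'' = (\<lambda>t. d' t @ drop (l t) (s t))"
    unfolding run_cycle_def xs_def by (auto split: if_splits option.splits)
  have I: "\<forall>t. sorted_wrt (<) (s t) \<and> length (s t) \<le> h t \<and>
      (\<forall>k\<in>set (s t). \<forall>j<k. (t, j) \<notin> B \<longrightarrow> j \<in> set (s t))" using assms(2) unfolding Inv_def .
  have N: "(\<forall>t. \<exists>n. d' t = take n (xs t)) \<and> (\<forall>t j. j \<in> set (xs t) \<and> (t, j) \<notin> B \<longrightarrow> j \<in> set (d' t))
     \<and> (\<forall>(t, k)\<in>set bs. \<forall>t'\<in>{1..<t}. k - R B (t, k) \<le> length (xs t'))"
  proof (rule nec_seq[OF rs])
    show "set bs \<subseteq> B" using assms(3) c by simp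
    show "\<forall>t. \<exists>n. xs t = take n (xs t)" by (metis take_all_iff order_refl)
    show "\<forall>t j. j \<in> set (xs t) \<and> (t, j) \<notin> B \<longrightarrow> j \<in> set (xs t)" by blast
    show "\<forall>t. sorted_wrt (<) (xs t)" using I unfolding xs_def by (simp add: sorted_wrt_take)
    show "\<forall>t. \<forall>k\<in>set (xs t). \<forall>j<k. (t, j) \<notin> B \<longrightarrow> j \<in> set (xs t)"
    proof
      fix t show "\<forall>k\<in>set (xs t). \<forall>j<k. (t, j) \<notin> B \<longrightarrow> j \<in> set (xs t)"
        unfolding xs_def by (rule dc_take) (use I in auto)
    qed
  qed
  have "Inv B h s''" unfolding Inv_def
  proof
    fix t
    obtain n where n: "d' t = take n (xs t)" using N by blast
    have e: "s'' t = take (min n (l t)) (s t) @ drop (l t) (s t)" using n s'' xs_def by (simp add: min.commute)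
    have so: "sorted_wrt (<) (s'' t)" using e take_drop_sorted I by simp
    have "length (s'' t) \<le> length (s t)" using e by auto
    hence le: "length (s'' t) \<le> h t" using I order_trans by blast
    have sub: "set (s'' t) \<subseteq> set (s t)" using e by (metis Un_subset_iff set_append set_drop_subset set_take_subset)
    have dc: "\<forall>k\<in>set (s'' t). \<forall>j<k. (t, j) \<notin> B \<longrightarrow> j \<in> set (s'' t)"
    proof (intro ballI allI impI)
      fix k j assume k: "k \<in> set (s'' t)" and j: "j < k" "(t, j) \<notin> B"
      have "j \<in> set (s t)" using I k j sub by blast
      hence "j \<in> set (xs t) \<or> j \<in> set (drop (l t) (s t))" unfolding xs_def
        by (metis Un_iff append_take_drop_id set_append)
      thus "j \<in> set (s'' t)"
      proof
        assume "j \<in> set (xs t)"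
        hence "j \<in> set (d' t)" using N j by blast
        thus ?thesis using s'' by simp
      qed (simp add: s'')
    qed
    show "sorted_wrt (<) (s'' t) \<and> length (s'' t) \<le> h t \<and>
      (\<forall>k\<in>set (s'' t). \<forall>j<k. (t, j) \<notin> B \<longrightarrow> j \<in> set (s'' t))" using so le dc by blast
  qed
  moreover have "\<forall>(t, k)\<in>set bs. \<forall>t'\<in>{1..<t}. k - R B (t, k) \<le> h t'"
  proof (intro ballI, clarify)
    fix t k t' assume a: "(t, k) \<in> set bs" "t' \<in> {1..<t}"
    have "k - R B (t, k) \<le> length (xs t')" using N a by blast
    also have "\<dots> \<le> h t'"
    proof -
      have "length (s t') \<le> h t'" using I by blast
      thus ?thesis unfolding xs_def by simp
    qed
    finally show "k - R B (t, k) \<le> h t'" .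
  qed
  ultimately show ?thesis using c by simp
qed

lemma nec_cycles:
  assumes "run_cycles m s cs = Some s'" "Inv B h s" "set (concat (map snd cs)) \<subseteq> B"
  shows "\<forall>(t, k)\<in>set (concat (map snd cs)). \<forall>t'\<in>{1..<t}. k - R B (t, k) \<le> h t'"
  using assms
proof (induction cs arbitrary: s)
  case Nil
  then show ?case by simp
next
  case (Cons c cs)
  from Cons.prems(1) obtain s1 where s1: "run_cycle m s c = Some s1" "run_cycles m s1 cs = Some s'"
    by (auto split: option.splits)
  have "Inv B h s1 \<and> (\<forall>(t, k)\<in>set (snd c). \<forall>t'\<in>{1..<t}. k - R B (t, k) \<le> h t')"
    using nec_cycle[OF s1(1) Cons.prems(2)] Cons.prems(3) by simp
  moreover have "set (concat (map snd cs)) \<subseteq> B" using Cons.prems(3) by simp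
  ultimately have "\<forall>(t, k)\<in>set (snd c). \<forall>t'\<in>{1..<t}. k - R B (t, k) \<le> h t'"
    "\<forall>(t, k)\<in>set (concat (map snd cs)). \<forall>t'\<in>{1..<t}. k - R B (t, k) \<le> h t'"
    using Cons.IH[OF s1(2)] by blast+
  then show ?case unfolding list.map concat.simps set_append ball_Un by blast
qed

lemma necessity:
  assumes "feasible m h B"
  shows "\<forall>b\<in>B. \<forall>t\<in>{1..<fst b}. h t \<ge> snd b - R B b"
proof -
  obtain cs s' where f: "run_cycles m (init_state m h) cs = Some s'"
    "set (concat (map snd cs)) = B" using assms unfolding feasible_def by blast
  have I: "Inv B h (init_state m h)" unfolding Inv_def init_state_def by auto
  have X: "\<forall>(t, k)\<in>set (concat (map snd cs)). \<forall>t'\<in>{1..<t}. k - R B (t, k) \<le> h t'"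
    by (rule nec_cycles[OF f(1) I]) (simp only: f(2) subset_refl)
  show ?thesis
  proof (intro ballI)
    fix b t assume b: "b \<in> B" and t: "t \<in> {1..<fst b}"
    have "b \<in> set (concat (map snd cs))" using b f(2) by simp
    hence "case b of (t, k) \<Rightarrow> \<forall>t'\<in>{1..<t}. k - R B (t, k) \<le> h t'" by (rule bspec[OF X])
    thus "h t \<ge> snd b - R B b" using t by (cases b) simp
  qed
qed

section \<open>Sufficiency\<close>

definition SX :: "nat \<Rightarrow> (nat \<Rightarrow> nat) \<Rightarrow> (nat \<times> nat) set \<Rightarrow> state" where
  "SX m h X = (\<lambda>t. if 1 \<le> t \<and> t \<le> m then filter (\<lambda>j. (t, j) \<notin> X) [0..<h t] else [])"

definition rr :: "(nat \<times> nat) set \<Rightarrow> nat \<times> nat \<Rightarrow> nat" where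
  "rr X b = length (filter (\<lambda>j. (fst b, j) \<notin> X) [0..<snd b])"

definition mkcyc :: "(nat \<times> nat) set \<Rightarrow> nat \<times> nat \<Rightarrow> (nat \<Rightarrow> nat) \<times> (nat \<times> nat) list" where
  "mkcyc X b = ((\<lambda>t'. if t' = fst b then Suc (rr X b) else if 1 \<le> t' \<and> t' < fst b then rr X b else 0), [b])"

fun cycs :: "(nat \<times> nat) set \<Rightarrow> (nat \<times> nat) list \<Rightarrow> ((nat \<Rightarrow> nat) \<times> (nat \<times> nat) list) list" where
  "cycs X [] = []"
| "cycs X (b # bs) = mkcyc X b # cycs (insert b X) bs"

definition okp :: "nat \<Rightarrow> (nat \<Rightarrow> nat) \<Rightarrow> (nat \<times> nat) set \<Rightarrow> nat \<times> nat \<Rightarrow> bool" where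
  "okp m h X b \<longleftrightarrow> 1 \<le> fst b \<and> fst b \<le> m \<and> snd b < h (fst b) \<and> b \<notin> X \<and>
     (\<forall>t'\<in>{1..<fst b}. rr X b \<le> length (SX m h X t'))"

lemma upt_split3: "k < n \<Longrightarrow> [0..<n] = [0..<k] @ k # [Suc k..<n]"
  by (metis less_imp_le_nat upt_add_eq_append le_add_diff_inverse upt_conv_Cons zero_le)

lemma step_cycle:
  assumes "okp m h X b"
  shows "run_cycle m (SX m h X) (mkcyc X b) = Some (SX m h (insert b X))"
proof -
  obtain t k where b: "b = (t, k)" by fastforce
  define P where "P = (\<lambda>j. (t, j) \<notin> X)"
  define A where "A = filter P [0..<k]"
  define C where "C = filter P [Suc k..<h t]"
  have o: "1 \<le> t" "t \<le> m" "k < h t" "b \<notin> X" "\<forall>t'\<in>{1..<t}. rr X b \<le> length (SX m h X t')"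
    using assms b unfolding okp_def by auto
  have rA: "rr X b = length A" unfolding rr_def A_def P_def b by simp
  have St: "SX m h X t = A @ k # C"
    using o upt_split3[OF o(3)] b unfolding SX_def A_def C_def P_def by simp
  define l where "l = fst (mkcyc X b)"
  have l: "l t = Suc (length A)" "\<And>t'. t' \<noteq> t \<Longrightarrow> 1 \<le> t' \<Longrightarrow> t' < t \<Longrightarrow> l t' = length A"
    "\<And>t'. t' \<noteq> t \<Longrightarrow> \<not> (1 \<le> t' \<and> t' < t) \<Longrightarrow> l t' = 0"
    unfolding l_def mkcyc_def b using rA b by auto
  define d where "d = (\<lambda>t'. take (l t') (SX m h X t'))"
  have dt: "d t = A @ [k]" unfolding d_def l St by simp
  have dt': "\<forall>t'\<in>{1..<t}. length (d t') = length A"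
    using o(5) l(2) rA unfolding d_def by auto
  have rs: "run_seq d [(t, k)] = Some (d(t := A))"
    using dt dt' by simp
  have chk: "\<forall>t'\<in>{1..m}. l t' \<le> length (SX m h X t')"
  proof
    fix t' assume "t' \<in> {1..m}"
    show "l t' \<le> length (SX m h X t')"
    proof (cases "t' = t")
      case True then show ?thesis using l(1) St by simp
    next
      case False then show ?thesis using l(2,3) o(5) rA by (cases "1 \<le> t' \<and> t' < t") auto
    qed
  qed
  have fin: "(\<lambda>t'. (d(t := A)) t' @ drop (l t') (SX m h X t')) = SX m h (insert b X)"
  proof
    fix t'
    show "(d(t := A)) t' @ drop (l t') (SX m h X t') = SX m h (insert b X) t'"
    proof (cases "t' = t")
      case True
      have "SX m h (insert b X) t = filter (\<lambda>j. (t, j) \<notin> insert b X) [0..<k] @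
            filter (\<lambda>j. (t, j) \<notin> insert b X) (k # [Suc k..<h t])"
        using o upt_split3[OF o(3)] unfolding SX_def by simp
      also have "filter (\<lambda>j. (t, j) \<notin> insert b X) [0..<k] = A"
        unfolding A_def P_def b by (rule filter_cong) auto
      also have "filter (\<lambda>j. (t, j) \<notin> insert b X) (k # [Suc k..<h t]) = C"
        unfolding C_def P_def b by (simp, rule filter_cong) auto
      finally show ?thesis using True St l(1) by simp
    next
      case False
      have "SX m h (insert b X) t' = SX m h X t'"
        unfolding SX_def b using False by simp
      then show ?thesis using False unfolding d_def by simp
    qed
  qed
  have sm: "snd (mkcyc X b) = [(t, k)]" by (simp add: mkcyc_def b)
  have "run_cycle m (SX m h X) (mkcyc X b) =
     (if \<forall>t\<in>{1..m}. l t \<le> length (SX m h X t) then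
        (case run_seq d (snd (mkcyc X b)) of
           None \<Rightarrow> None
         | Some d' \<Rightarrow> Some (\<lambda>t. d' t @ drop (l t) (SX m h X t)))
      else None)"
    unfolding run_cycle_def Let_def l_def d_def by (rule refl)
  also have "\<dots> = Some (\<lambda>t'. (d(t := A)) t' @ drop (l t') (SX m h X t'))"
    by (simp only: sm rs chk[THEN eqTrueI] if_True option.case)
  also have "\<dots> = Some (SX m h (insert b X))" using fin by (rule arg_cong)
  finally show ?thesis .
qed

lemma suff_run:
  assumes "\<And>i. i < length L \<Longrightarrow> okp m h (X \<union> set (take i L)) (L ! i)"
  shows "run_cycles m (SX m h X) (cycs X L) = Some (SX m h (X \<union> set L))"
  using assms
proof (induction L arbitrary: X)
  case Nil
  then show ?case by simp
next
  case (Cons b bs)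
  have o: "okp m h X b" using Cons.prems[of 0] by simp
  have "run_cycles m (SX m h (insert b X)) (cycs (insert b X) bs) = Some (SX m h (insert b X \<union> set bs))"
  proof (rule Cons.IH)
    fix i assume "i < length bs"
    hence "okp m h (X \<union> set (take (Suc i) (b # bs))) ((b # bs) ! Suc i)" using Cons.prems[of "Suc i"] by simp
    thus "okp m h (insert b X \<union> set (take i bs)) (bs ! i)" by simp
  qed
  then show ?case using step_cycle[OF o] by simp
qed

lemma concat_cycs: "concat (map snd (cycs X L)) = L"
  by (induction L arbitrary: X) (auto simp: mkcyc_def)

lemma length_filter_upt: "length (filter P [0..<k]) = card {j. j < k \<and> P j}"
proof -
  have "length (filter P [0..<k]) = card (set (filter P [0..<k]))"
    by (rule distinct_card[symmetric]) simp
  also have "set (filter P [0..<k]) = {j. j < k \<and> P j}" by auto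
  finally show ?thesis .
qed

lemma sufficiency:
  assumes B: "B \<subseteq> {(t, k). 1 \<le> t \<and> t \<le> m \<and> k < h t}"
    and H: "\<forall>b\<in>B. \<forall>t\<in>{1..<fst b}. h t \<ge> snd b - R B b"
  shows "feasible m h B"
proof -
  define key :: "nat \<times> nat \<Rightarrow> nat \<times> nat" where "key b = (m - fst b, snd b)" for b
  have "B \<subseteq> Sigma {1..m} (\<lambda>t. {..<h t})" using B by auto
  hence finB: "finite B" by (rule finite_subset) auto
  define L where "L = sort_key key (sorted_list_of_set B)"
  have setL: "set L = B" unfolding L_def using finB by simp
  have distL: "distinct L" unfolding L_def using finB by simp
  have sortL: "sorted (map key L)" unfolding L_def by simp
  have injk: "\<And>x y. x \<in> B \<Longrightarrow> y \<in> B \<Longrightarrow> key x = key y \<Longrightarrow> x = y"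
  proof -
    fix x y assume xy: "x \<in> B" "y \<in> B" "key x = key y"
    hence "fst x \<le> m" "fst y \<le> m" using B by auto
    moreover have "m - fst x = m - fst y" "snd x = snd y" using xy(3) unfolding key_def by auto
    ultimately show "x = y" by (metis prod_eqI diff_diff_cancel)
  qed
  have mono: "\<And>p q. p \<le> q \<Longrightarrow> q < length L \<Longrightarrow> key (L ! p) \<le> key (L ! q)"
    using sorted_nth_mono[OF sortL] by simp
  have ok: "okp m h ({} \<union> set (take i L)) (L ! i)" if i: "i < length L" for i
  proof -
    define Y where "Y = set (take i L)"
    obtain t k where b: "L ! i = (t, k)" by fastforce
    have bB: "(t, k) \<in> B" using b i setL nth_mem by metis
    hence tk: "1 \<le> t" "t \<le> m" "k < h t" using B by auto
    have YB: "Y \<subseteq> B" unfolding Y_def using setL set_take_subset by metis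
    have a: "key y < key (t, k)" if y: "y \<in> Y" for y
    proof -
      obtain p where p: "p < i" "y = L ! p" using y unfolding Y_def
        by (auto simp: in_set_conv_nth)
      have "key y \<le> key (t, k)" using mono[of p i] p i b by simp
      moreover have "y \<noteq> (t, k)"
      proof -
        have "p < length L" "p \<noteq> i" using p i by auto
        hence "L ! p \<noteq> L ! i" using distL i by (simp add: nth_eq_iff_index_eq)
        thus ?thesis using p b by simp
      qed
      hence "key y \<noteq> key (t, k)" using injk y YB bB by blast
      ultimately show ?thesis by simp
    qed
    have notin: "(t, k) \<notin> Y" using a by blast
    have bel: "(t, j) \<in> Y" if "(t, j) \<in> B" "j < k" for j
    proof -
      have "(t, j) \<in> set L" using that(1) setL by simp
      then obtain p where p: "p < length L" "L ! p = (t, j)" unfolding in_set_conv_nth by blast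
      have "p < i"
      proof (rule ccontr)
        assume "\<not> p < i"
        hence "key (L ! i) \<le> key (L ! p)" using mono[of i p] p by simp
        thus False using b p that(2) unfolding key_def by simp
      qed
      hence "p < length (take i L)" "take i L ! p = (t, j)" using p by auto
      thus ?thesis unfolding Y_def by (metis nth_mem)
    qed
    have rr: "rr Y (t, k) = k - R B (t, k)"
    proof -
      have "filter (\<lambda>j. (t, j) \<notin> Y) [0..<k] = filter (\<lambda>j. (t, j) \<notin> B) [0..<k]"
        using bel YB by (intro filter_cong) auto
      hence "rr Y (t, k) = card {j. j < k \<and> \<not> (t, j) \<in> B}"
        unfolding rr_def by (simp add: length_filter_upt)
      also have "\<dots> = k - R B (t, k)" unfolding R_def using card_split[of k "\<lambda>j. (t, j) \<in> B"] by simp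
      finally show ?thesis .
    qed
    have "\<forall>t'\<in>{1..<t}. rr Y (t, k) \<le> length (SX m h Y t')"
    proof
      fix t' assume t': "t' \<in> {1..<t}"
      have "\<forall>j. (t', j) \<notin> Y"
      proof (intro allI notI)
        fix j assume "(t', j) \<in> Y"
        hence "key (t', j) < key (t, k)" by (rule a)
        thus False using t' tk unfolding key_def by auto
      qed
      hence "SX m h Y t' = [0..<h t']" unfolding SX_def using t' tk by simp
      thus "rr Y (t, k) \<le> length (SX m h Y t')" using rr H bB t' by auto
    qed
    thus ?thesis unfolding okp_def using tk notin b Y_def by simp
  qed
  have run: "run_cycles m (SX m h {}) (cycs {} L) = Some (SX m h ({} \<union> set L))"
    by (rule suff_run) (rule ok)
  have "SX m h {} = init_state m h" unfolding SX_def init_state_def by auto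
  hence "run_cycles m (init_state m h) (cycs {} L) = Some (SX m h B)" using run setL by simp
  thus ?thesis unfolding feasible_def using concat_cycs[of "{}" L] distL setL by metis
qed

theorem lemma1:
  fixes m :: nat and h :: "nat \<Rightarrow> nat" and B :: "(nat \<times> nat) set"
  assumes "B \<subseteq> {(t, k). 1 \<le> t \<and> t \<le> m \<and> k < h t}"
  shows "feasible m h B \<longleftrightarrow>
         (\<forall>b\<in>B. \<forall>t\<in>{1..<fst b}. h t \<ge> snd b - R B b)"
  using necessity sufficiency[OF assms] by blast

end
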